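(* Under the Local Regularity Assumption (see context), let $L:=\sup\{\|\zeta\|:\zeta\in\partial f(x),\,x\in\mathcal{X}\cap B_\epsilon(\bar x)\}$, assumed finite and positive, and $\tau:=\mu/L$, and suppose $\tau\le1/\sqrt2$. Define $\gamma=\frac{\epsilon\rho}{4L+\epsilon\rho}$, $\lambda=\frac{\gamma\mu^2}{\rho L}$, and $q=\sqrt{1-(1-\gamma)\tau^2}$. Let $x_0\in B_{\epsilon/4}(\bar x)\cap\mathcal{X}$ satisfy $\mathrm{dist}(x_0,\mathcal{X}^* )\le\gamma\mu/\rho$. Then the iterates of the geometrically decaying subgradient method with parameters $\lambda,q$ started at $x_0$ all lie in $B_\epsilon(\bar x)$ and satisfy $$\mathrm{dist}^2(x_k,\mathcal{X}^* )\le\frac{\gamma^2\mu^2}{\rho^2}\big(1-(1-\gamma)\tau^2\big)^k\quad\text{for all }k\ge0.$$ Moreover, the iterates converge to some $x_\infty\in\mathcal{X}^*$ with $\|x_k-x_\infty\|\le\frac{\lambda}{1-q}q^k$ for all $k\ge0$.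
   Context: $\mathbf{E}$ is a Euclidean space with norm $\|\cdot\|$; $B_\epsilon(z)$ is the closed ball of radius $\epsilon$ about $z$; $\mathrm{proj}_{\mathcal{X}}$ is the Euclidean projection. For $f\colon\mathbf{E}\to\mathbb{R}$, $\partial f(x)$ is the (Fréchet) subdifferential: the set of $\xi$ with $f(y)\ge f(x)+\langle\xi,y-x\rangle+o(\|y-x\|)$ as $y\to x$. Local Regularity Assumption: $\mathcal{X}\subset\mathbf{E}$ is nonempty closed convex, $f\colon\mathbf{E}\to\mathbb{R}$ is continuous, $\mathcal{X}^*:=\operatorname{argmin}_{x\in\mathcal{X}}f$ is nonempty, $\bar x\in\mathcal{X}^*$, and $\epsilon,\mu,\rho>0$ satisfy: (local weak convexity) $f(y)\ge f(x)+\langle\zeta,y-x\rangle-\frac\rho2\|y-x\|^2$ for all $x,y\in\mathcal{X}\cap B_\epsilon(\bar x)$ and $\zeta\in\partial f(x)$; (local sharpness) $f(x)-\inf_{\mathcal{X}}f\ge\mu\,\mathrm{dist}(x,\mathcal{X}^* )$ for all $x\in\mathcal{X}\cap B_\epsilon(\bar x)$. Geometrically decaying subgradient method with parameters $\lambda>0$, $q\in(0,1)$: given $x_k$, choose $\zeta_k\in\partial f(x_k)$; if $\zeta_k=0$ set $x_{k+1}=x_k$, otherwise $x_{k+1}=\mathrm{proj}_{\mathcal{X}}\big(x_k-\lambda q^k\frac{\zeta_k}{\|\zeta_k\|}\big)$. *)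

theory Defs
  imports "HOL-Analysis.Analysis"
begin

definition frechet_subdiff :: "('a::euclidean_space \<Rightarrow> real) \<Rightarrow> 'a \<Rightarrow> 'a set" where
  "frechet_subdiff f x = {\<xi>. \<forall>e>0. \<exists>d>0. \<forall>y. norm (y - x) < d \<longrightarrow>
      f y \<ge> f x + \<xi> \<bullet> (y - x) - e * norm (y - x)}"

definition argmin_on :: "('a \<Rightarrow> real) \<Rightarrow> 'a set \<Rightarrow> 'a set" where
  "argmin_on f X = {x \<in> X. \<forall>y\<in>X. f x \<le> f y}"

end

theory Submission
  imports Defs
begin

lemma quad_aux:
  fixes d s t g B :: real
  assumes "0 \<le> d" "d \<le> s" "0 \<le> t" "t^2 \<le> 1/2" "0 \<le> g" "0 \<le> B" "B \<le> g*t^2"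
  shows "d^2 - 2*t^2* s*d + B*d^2 + t^2* s^2 \<le> s^2*(1-(1-g)*t^2)"
proof -
  have "B*d^2 \<le> g*t^2*d^2" using assms by (intro mult_right_mono) auto
  moreover have "(d-s)*((1+g*t^2)*(d+s) - 2*t^2* s) \<le> 0"
  proof (rule mult_nonpos_nonneg)
    show "d - s \<le> 0" using assms by simp
    have "0 \<le> g*t^2*(d+s)" using assms by simp
    then have "(1+g*t^2)*(d+s) \<ge> d+s" by (simp add: algebra_simps)
    moreover have "2*t^2* s \<le> s" using assms mult_right_mono[of "2*t^2" 1 s] by auto
    ultimately show "0 \<le> (1+g*t^2)*(d+s) - 2*t^2* s" using assms by linarith
  qed
  ultimately show ?thesis by (simp add: algebra_simps power2_eq_square)
qed

lemma norm_step_sq: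
  fixes u z :: "'a::real_inner"
  shows "(norm (u - a *\<^sub>R z))^2 = (norm u)^2 - 2*a*(z \<bullet> u) + a^2*(norm z)^2"
  unfolding power2_norm_eq_inner
  by (simp add: inner_diff_left inner_diff_right inner_commute algebra_simps power2_eq_square)

theorem theorem5p6:
  fixes f :: "'a::euclidean_space \<Rightarrow> real"
    and X :: "'a set" and xbar :: 'a
    and \<epsilon> \<mu> \<rho> L \<tau> \<gamma> lam q :: real
    and x \<zeta> :: "nat \<Rightarrow> 'a"
  assumes X_nonempty: "X \<noteq> {}" and X_closed: "closed X" and X_convex: "convex X"
    and f_cont: "continuous_on UNIV f"
    and Xstar_nonempty: "argmin_on f X \<noteq> {}"
    and xbar_in: "xbar \<in> argmin_on f X"
    and eps_pos: "\<epsilon> > 0" and mu_pos: "\<mu> > 0" and rho_pos: "\<rho> > 0"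
    and weak_convex: "\<And>x y \<zeta>. x \<in> X \<inter> cball xbar \<epsilon> \<Longrightarrow> y \<in> X \<inter> cball xbar \<epsilon> \<Longrightarrow>
          \<zeta> \<in> frechet_subdiff f x \<Longrightarrow> f y \<ge> f x + \<zeta> \<bullet> (y - x) - \<rho> / 2 * (norm (y - x))\<^sup>2"
    and sharp: "\<And>x. x \<in> X \<inter> cball xbar \<epsilon> \<Longrightarrow>
          f x - Inf (f ` X) \<ge> \<mu> * infdist x (argmin_on f X)"
    and L_nonempty: "{norm \<zeta> | \<zeta> x. x \<in> X \<inter> cball xbar \<epsilon> \<and> \<zeta> \<in> frechet_subdiff f x} \<noteq> {}"
    and L_bdd: "bdd_above {norm \<zeta> | \<zeta> x. x \<in> X \<inter> cball xbar \<epsilon> \<and> \<zeta> \<in> frechet_subdiff f x}"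
    and L_def: "L = Sup {norm \<zeta> | \<zeta> x. x \<in> X \<inter> cball xbar \<epsilon> \<and> \<zeta> \<in> frechet_subdiff f x}"
    and L_pos: "L > 0"
    and tau_def: "\<tau> = \<mu> / L"
    and tau_le: "\<tau> \<le> 1 / sqrt 2"
    and gamma_def: "\<gamma> = \<epsilon> * \<rho> / (4 * L + \<epsilon> * \<rho>)"
    and lambda_def: "lam = \<gamma> * \<mu>\<^sup>2 / (\<rho> * L)"
    and q_def: "q = sqrt (1 - (1 - \<gamma>) * \<tau>\<^sup>2)"
    and x0_in: "x 0 \<in> cball xbar (\<epsilon> / 4) \<inter> X"
    and x0_dist: "infdist (x 0) (argmin_on f X) \<le> \<gamma> * \<mu> / \<rho>"
    and zeta_sub: "\<And>k. \<zeta> k \<in> frechet_subdiff f (x k)"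
    and step: "\<And>k. x (Suc k) = (if \<zeta> k = 0 then x k
                 else closest_point X (x k - (lam * q ^ k / norm (\<zeta> k)) *\<^sub>R \<zeta> k))"
  shows "(\<forall>k. x k \<in> cball xbar \<epsilon>) \<and>
         (\<forall>k. (infdist (x k) (argmin_on f X))\<^sup>2
                \<le> \<gamma>\<^sup>2 * \<mu>\<^sup>2 / \<rho>\<^sup>2 * (1 - (1 - \<gamma>) * \<tau>\<^sup>2) ^ k) \<and>
         (\<exists>xinf \<in> argmin_on f X. x \<longlonglongrightarrow> xinf \<and>
            (\<forall>k. norm (x k - xinf) \<le> lam / (1 - q) * q ^ k))"
proof -
  define S where "S = argmin_on f X"
  define D where "D = \<gamma> * \<mu> / \<rho>"
  define c where "c = (1 - \<gamma>) * \<tau>\<^sup>2"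
  have L_eq: "4 * L + \<epsilon> * \<rho> > 0" using L_pos eps_pos rho_pos by (simp add: add_pos_pos)
  have gam0: "0 < \<gamma>" unfolding gamma_def using L_eq eps_pos rho_pos by simp
  have gam1: "\<gamma> < 1" unfolding gamma_def using L_eq L_pos by (simp add: field_simps)
  have tau0: "0 < \<tau>" unfolding tau_def using mu_pos L_pos by simp
  have tau2: "\<tau>\<^sup>2 \<le> 1/2"
  proof -
    have "\<tau>\<^sup>2 \<le> (1 / sqrt 2)\<^sup>2" using tau_le tau0 by (intro power_mono) auto
    also have "\<dots> = 1/2" by (simp add: power_divide)
    finally show ?thesis .
  qed
  have tau1: "\<tau> \<le> 1"
  proof (rule ccontr)
    assume "\<not> \<tau> \<le> 1"
    then have "1 < \<tau>\<^sup>2" by (simp add: less_1_mult power2_eq_square)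
    then show False using tau2 by simp
  qed
  have c0: "0 < c" unfolding c_def using gam1 tau0 by simp
  have c1: "c \<le> 1/2" unfolding c_def
  proof -
    have "(1 - \<gamma>) * \<tau>\<^sup>2 \<le> 1 * \<tau>\<^sup>2" using gam0 by (intro mult_right_mono) auto
    then show "(1 - \<gamma>) * \<tau>\<^sup>2 \<le> 1/2" using tau2 by simp
  qed
  have q_c: "q = sqrt (1 - c)" unfolding q_def c_def by simp
  have q0: "0 < q" unfolding q_c using c1 by simp
  have qsq: "q\<^sup>2 = 1 - c" unfolding q_c using c1 by simp
  have qle: "q \<le> 1 - c/2"
  proof -
    have "q \<le> sqrt ((1 - c/2)\<^sup>2)" unfolding q_c
      by (rule real_sqrt_le_mono) (simp add: power2_eq_square algebra_simps)
    also have "\<dots> = 1 - c/2" using c1 by simp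
    finally show ?thesis .
  qed
  have q1: "q < 1" using qle c0 by simp
  have D0: "0 < D" unfolding D_def using gam0 mu_pos rho_pos by simp
  have lamD: "lam = D * \<tau>" unfolding lambda_def D_def tau_def using rho_pos L_pos
    by (simp add: power2_eq_square field_simps)
  have lam0: "0 < lam" using lamD D0 tau0 by simp
  have lamq: "lam / (1 - q) \<le> \<epsilon> / 2"
  proof -
    have pp1: "L * (L * (\<mu> * (\<mu> * (\<rho> * 16)))) > 0"
      using L_pos mu_pos rho_pos by simp
    have pp2: "L * (\<epsilon> * (\<mu> * (\<mu> * (\<rho> * (\<rho> * 4))))) > 0"
      using L_pos mu_pos rho_pos eps_pos by simp
    have "lam / (1 - q) \<le> lam / (c / 2)"
      using lam0 c0 qle by (intro divide_left_mono) auto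
    also have "\<dots> = \<epsilon> / 2"
      using pp1 pp2 unfolding lamD c_def D_def tau_def gamma_def using L_pos eps_pos rho_pos mu_pos L_eq
      by (simp add: field_simps power2_eq_square) (simp add: divide_eq_eq algebra_simps, smt (verit) pp1 pp2)
    finally show ?thesis .
  qed
  have Dle: "D \<le> \<epsilon> / 4"
  proof -
    have pp3: "\<epsilon> * (\<rho> * \<rho>) + L * (\<rho> * 4) > 0" using rho_pos L_pos eps_pos by (simp add: add_pos_pos)
    have "D = \<epsilon> * \<mu> / (4 * L + \<epsilon> * \<rho>)" unfolding D_def gamma_def using rho_pos L_eq
      by (simp add: field_simps) (simp add: divide_eq_eq algebra_simps, smt (verit) pp3)
    also have "\<dots> \<le> \<epsilon> * \<mu> / (4 * L)" using eps_pos mu_pos L_pos rho_pos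
      by (intro divide_left_mono) (auto intro!: mult_pos_pos add_pos_pos)
    also have "\<dots> = \<epsilon> / 4 * \<tau>" unfolding tau_def by simp
    also have "\<dots> \<le> \<epsilon> / 4" using tau1 eps_pos by (simp add: mult_left_le)
    finally show ?thesis .
  qed
  have S_sub: "S \<subseteq> X" unfolding S_def argmin_on_def by auto
  have xbarS: "xbar \<in> S" using xbar_in S_def by simp
  have xbarX: "xbar \<in> X" using xbarS S_sub by auto
  have fxbar: "\<And>y. y \<in> X \<Longrightarrow> f xbar \<le> f y" using xbar_in unfolding argmin_on_def by auto
  have S_eq: "S = X \<inter> {z. f z \<le> f xbar}"
    unfolding S_def argmin_on_def using fxbar xbarX by (auto intro: order_trans)
  have S_closed: "closed S" unfolding S_eq
    by (intro closed_Int X_closed closed_Collect_le f_cont continuous_on_const)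
  have S_ne: "S \<noteq> {}" using xbarS by auto
  have fS: "\<And>y. y \<in> S \<Longrightarrow> f y = f xbar" using S_eq fxbar by (auto intro: antisym)
  have Inf_eq: "Inf (f ` X) = f xbar" using xbarX fxbar by (intro cInf_eq_minimum) auto
  have zeta_le: "norm (\<zeta> k) \<le> L" if "x k \<in> X \<inter> cball xbar \<epsilon>" for k
    unfolding L_def by (rule cSup_upper[OF _ L_bdd]) (use zeta_sub that in blast)
  have xX: "x k \<in> X" for k
  proof (induction k)
    case 0 show ?case using x0_in by simp
  next
    case (Suc k) then show ?case
      by (simp add: step closest_point_in_set X_closed X_nonempty)
  qed
  have stepd: "dist (x (Suc k)) (x k) \<le> lam * q^k" for k
  proof (cases "\<zeta> k = 0")
    case True then show ?thesis using step[of k] lam0 q0 by simp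
  next
    case False
    have "dist (x (Suc k)) (x k) = dist (closest_point X (x k - (lam*q^k/norm (\<zeta> k)) *\<^sub>R \<zeta> k)) (closest_point X (x k))"
      using step[of k] False closest_point_self[OF xX[of k]] by simp
    also have "\<dots> \<le> dist (x k - (lam*q^k/norm (\<zeta> k)) *\<^sub>R \<zeta> k) (x k)"
      by (rule closest_point_lipschitz[OF X_convex X_closed X_nonempty])
    also have "\<dots> = lam*q^k" using False lam0 q0 by (simp add: dist_norm)
    finally show ?thesis .
  qed
  have x0dist: "dist (x k) (x 0) \<le> lam * (1 - q^k) / (1 - q)" for k
  proof (induction k)
    case 0 show ?case by simp
  next
    case (Suc k)
    have "dist (x (Suc k)) (x 0) \<le> dist (x (Suc k)) (x k) + dist (x k) (x 0)" by (rule dist_triangle)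
    also have "\<dots> \<le> lam * q^k + lam * (1 - q^k) / (1 - q)" using stepd[of k] Suc.IH by linarith
    also have "\<dots> = lam * (1 - q^Suc k) / (1 - q)" using q1 by (simp add: field_simps)
    finally show ?case .
  qed
  have xball: "dist xbar (x k) \<le> 3 * \<epsilon> / 4" for k
  proof -
    have "lam * (1 - q^k) \<le> lam" using lam0 q0 by (simp add: mult_le_cancel_left1)
    then have "lam * (1 - q^k) / (1 - q) \<le> lam / (1 - q)" using q1 by (intro divide_right_mono) auto
    moreover have "dist xbar (x k) \<le> dist xbar (x 0) + dist (x k) (x 0)" by (rule dist_triangle2)
    moreover have "dist xbar (x 0) \<le> \<epsilon> / 4" using x0_in by simp
    ultimately show ?thesis using x0dist[of k] lamq by linarith
  qed
  have xk_in: "x k \<in> X \<inter> cball xbar \<epsilon>" for k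
    using xX[of k] xball[of k] eps_pos by simp
  have qk: "0 < q^k" "q^k \<le> 1" for k using q0 q1 by (auto intro: power_le_one)
  have dk: "infdist (x k) S \<le> D * q^k" for k
  proof (induction k)
    case 0 show ?case using x0_dist unfolding S_def D_def by simp
  next
    case (Suc k)
    obtain y where yS: "y \<in> S" and yd: "infdist (x k) S = dist (x k) y"
      using infdist_attains_inf[OF S_closed S_ne] by blast
    define d where "d = dist (x k) y"
    define s where "s = D * q^k"
    have d0: "0 \<le> d" unfolding d_def by simp
    have ds: "d \<le> s" using Suc.IH yd unfolding d_def s_def by simp
    have sD: "s \<le> D" unfolding s_def using qk[of k] D0 by (simp add: mult_left_le)
    have s0: "0 \<le> s" unfolding s_def using qk[of k] D0 by simp
    have dD: "d \<le> D" using ds sD by linarith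
    have y_in: "y \<in> X \<inter> cball xbar \<epsilon>"
    proof -
      have "dist xbar y \<le> dist xbar (x k) + dist (x k) y" by (rule dist_triangle)
      then have "dist xbar y \<le> \<epsilon>" using xball[of k] dD Dle d_def by linarith
      then show ?thesis using yS S_sub by auto
    qed
    have wc: "f y \<ge> f (x k) + \<zeta> k \<bullet> (y - x k) - \<rho> / 2 * (norm (y - x k))\<^sup>2"
      using weak_convex[OF xk_in y_in zeta_sub] .
    have sh: "f (x k) - f xbar \<ge> \<mu> * d" using sharp[OF xk_in[of k]] Inf_eq yd d_def S_def by simp
    have ny: "norm (y - x k) = d" by (simp add: d_def dist_norm norm_minus_commute)
    have nu: "norm (x k - y) = d" by (simp add: d_def dist_norm)
    have ie: "\<zeta> k \<bullet> (y - x k) = - (\<zeta> k \<bullet> (x k - y))" by (simp add: inner_diff_right)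
    have inner_bd: "\<zeta> k \<bullet> (x k - y) \<ge> \<mu>*d - \<rho>/2*d^2"
      using wc[unfolded ny] sh ie fS[OF yS] by linarith
    have rd: "\<rho> * d \<le> \<mu>"
    proof -
      have "\<rho> * d \<le> \<rho> * D" using dD rho_pos by simp
      also have "\<dots> = \<gamma> * \<mu>" unfolding D_def using rho_pos by simp
      also have "\<dots> \<le> \<mu>" using gam1 mu_pos by simp
      finally show ?thesis .
    qed
    have "\<rho>*d*d \<le> \<mu>*d" using rd d0 by (rule mult_right_mono)
    then have P0: "\<rho>/2*d^2 \<le> \<mu>*d/2" by (simp add: power2_eq_square)
    define P where "P = \<mu>*d - \<rho>/2*d^2"
    have "0 \<le> \<mu>*d" using mu_pos d0 by simp
    then have Pnn: "0 \<le> P" unfolding P_def using P0 by linarith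
    show ?case
    proof (cases "\<zeta> k = 0")
      case True
      then have "\<mu>*d - \<rho>/2*d^2 \<le> 0" using inner_bd by simp
      then have "\<mu>*d \<le> 0" using P0 by linarith
      then have "d = 0" using mu_pos d0 by (simp add: mult_le_0_iff)
      then have "infdist (x (Suc k)) S = 0" using step[of k] True yd d_def by simp
      then show ?thesis using D0 q0 by simp
    next
      case False
      define n where "n = norm (\<zeta> k)"
      define \<alpha> where "\<alpha> = lam * q^k"
      have n0: "0 < n" using False n_def by simp
      have nL: "n \<le> L" using zeta_le[OF xk_in] n_def by simp
      have a0: "0 \<le> \<alpha>" using lam0 qk[of k] \<alpha>_def by simp
      have "dist (x (Suc k)) y = dist (closest_point X (x k - (\<alpha>/n) *\<^sub>R \<zeta> k)) (closest_point X y)"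
        using step[of k] False closest_point_self[of y X] y_in \<alpha>_def n_def by simp
      also have "\<dots> \<le> dist (x k - (\<alpha>/n) *\<^sub>R \<zeta> k) y"
        by (rule closest_point_lipschitz[OF X_convex X_closed X_nonempty])
      also have "\<dots> = norm ((x k - y) - (\<alpha>/n) *\<^sub>R \<zeta> k)" by (simp add: dist_norm algebra_simps)
      finally have dn: "dist (x (Suc k)) y \<le> norm ((x k - y) - (\<alpha>/n) *\<^sub>R \<zeta> k)" .
      have sq: "(norm ((x k - y) - (\<alpha>/n) *\<^sub>R \<zeta> k))^2 = d^2 - 2*\<alpha>*((\<zeta> k \<bullet> (x k - y))/n) + \<alpha>^2"
        using norm_step_sq[of "x k - y" "\<alpha>/n" "\<zeta> k"] nu n0 n_def
        by (simp add: power_divide field_simps)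
      have "P/L \<le> P/n" using Pnn n0 nL by (intro divide_left_mono) auto
      also have "\<dots> \<le> (\<zeta> k \<bullet> (x k - y))/n" using inner_bd P_def n0 by (intro divide_right_mono) auto
      finally have PL: "P/L \<le> (\<zeta> k \<bullet> (x k - y))/n" .
      have "2*\<alpha>*(P/L) \<le> 2*\<alpha>*((\<zeta> k \<bullet> (x k - y))/n)" using PL a0 by (intro mult_left_mono) auto
      then have sq2: "(norm ((x k - y) - (\<alpha>/n) *\<^sub>R \<zeta> k))^2 \<le> d^2 - 2*\<alpha>*(P/L) + \<alpha>^2" using sq by linarith
      define B where "B = \<tau> * s * \<rho> / L"
      have mu_eq: "\<mu> = \<tau> * L" unfolding tau_def using L_pos by simp
      have aeq: "\<alpha> = \<tau> * s" unfolding \<alpha>_def s_def lamD by simp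
      have eq: "d^2 - 2*\<alpha>*(P/L) + \<alpha>^2 = d^2 - 2*\<tau>^2* s*d + B*d^2 + \<tau>^2* s^2"
        unfolding aeq P_def B_def mu_eq using L_pos by (simp add: field_simps power2_eq_square)
      have B0: "0 \<le> B" unfolding B_def using tau0 s0 rho_pos L_pos by simp
      have BB: "B \<le> \<gamma> * \<tau>^2"
      proof -
        have "B \<le> \<tau> * D * \<rho> / L" unfolding B_def using sD tau0 rho_pos L_pos
          by (intro divide_right_mono mult_right_mono mult_left_mono) auto
        also have "\<dots> = \<gamma> * \<tau>^2" unfolding D_def tau_def using rho_pos L_pos
          by (simp add: power2_eq_square)
        finally show ?thesis .
      qed
      have "d^2 - 2*\<tau>^2* s*d + B*d^2 + \<tau>^2* s^2 \<le> s^2*(1-(1-\<gamma>)*\<tau>^2)"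
        using quad_aux[OF d0 ds _ tau2 _ B0 BB] tau0 gam0 by simp
      also have "\<dots> = (D * q^Suc k)^2"
      proof -
        have qq: "1-(1-\<gamma>)*\<tau>^2 = q^2" using qsq c_def by simp
        show ?thesis unfolding qq s_def by (simp add: power_mult_distrib power_Suc2 mult.assoc)
      qed
      finally have X: "d^2 - 2*\<tau>^2* s*d + B*d^2 + \<tau>^2* s^2 \<le> (D * q^Suc k)^2" .
      have "(norm ((x k - y) - (\<alpha>/n) *\<^sub>R \<zeta> k))^2 \<le> (D * q^Suc k)^2"
        using order_trans[OF sq2[unfolded eq] X] .
      then have "norm ((x k - y) - (\<alpha>/n) *\<^sub>R \<zeta> k) \<le> D * q^Suc k"
        by (rule power2_le_imp_le) (use D0 q0 in simp)
      then have "dist (x (Suc k)) y \<le> D * q^Suc k" using dn by linarith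
      then show ?thesis using infdist_le[OF yS, of "x (Suc k)"] by linarith
    qed
  qed
  have part1: "\<forall>k. x k \<in> cball xbar \<epsilon>" using xk_in by blast
  have part2: "\<forall>k. (infdist (x k) (argmin_on f X))\<^sup>2
                \<le> \<gamma>\<^sup>2 * \<mu>\<^sup>2 / \<rho>\<^sup>2 * (1 - (1 - \<gamma>) * \<tau>\<^sup>2) ^ k"
  proof
    fix k
    have "(infdist (x k) S)\<^sup>2 \<le> (D * q^k)\<^sup>2" using dk[of k] by (intro power_mono) (auto simp: infdist_nonneg)
    also have "\<dots> = D^2 * (q^2)^k" by (simp add: power_mult_distrib flip: power_mult) (simp add: mult.commute)
    also have "\<dots> = \<gamma>\<^sup>2 * \<mu>\<^sup>2 / \<rho>\<^sup>2 * (1 - (1 - \<gamma>) * \<tau>\<^sup>2) ^ k"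
      unfolding qsq c_def D_def by (simp add: power_divide power_mult_distrib)
    finally show "(infdist (x k) (argmin_on f X))\<^sup>2
                \<le> \<gamma>\<^sup>2 * \<mu>\<^sup>2 / \<rho>\<^sup>2 * (1 - (1 - \<gamma>) * \<tau>\<^sup>2) ^ k" unfolding S_def .
  qed
  have mk: "dist (x (k+j)) (x k) \<le> lam * q^k * (1 - q^j) / (1 - q)" for k j
  proof (induction j)
    case 0 show ?case by simp
  next
    case (Suc j)
    have "dist (x (k + Suc j)) (x k) \<le> dist (x (Suc (k+j))) (x (k+j)) + dist (x (k+j)) (x k)"
      by (simp add: dist_triangle)
    also have "\<dots> \<le> lam * q^(k+j) + lam * q^k * (1 - q^j) / (1 - q)" using stepd[of "k+j"] Suc.IH by linarith
    also have "\<dots> = lam * q^k * (1 - q^Suc j) / (1 - q)" using q1 by (simp add: field_simps power_add)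
    finally show ?case .
  qed
  have mk2: "dist (x m) (x k) \<le> lam * q^k / (1 - q)" if "k \<le> m" for k m
  proof -
    define j where "j = m - k"
    have mj: "m = k + j" using that unfolding j_def by simp
    have "lam * q^k * (1 - q^j) \<le> lam * q^k * 1" using lam0 qk[of k] qk[of j]
      by (intro mult_left_mono) auto
    then have "lam * q^k * (1 - q^j) / (1 - q) \<le> lam * q^k / (1 - q)" using q1 by (intro divide_right_mono) auto
    then show ?thesis using mk[of k j] unfolding mj by linarith
  qed
  have lim0: "(\<lambda>n. lam * q^n / (1 - q)) \<longlonglongrightarrow> lam * 0 / (1 - q)"
    by (intro tendsto_intros LIMSEQ_power_zero) (use q0 q1 in auto)
  have "Cauchy x"
  proof (rule metric_CauchyI)
    fix e :: real assume e: "0 < e"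
    have "\<forall>\<^sub>F n in sequentially. lam * q^n / (1 - q) < e/2"
      using order_tendstoD(2)[OF lim0, of "e/2"] e by simp
    then obtain M where M: "\<And>n. n \<ge> M \<Longrightarrow> lam * q^n / (1 - q) < e/2"
      unfolding eventually_sequentially by blast
    have "\<forall>m\<ge>M. \<forall>n\<ge>M. dist (x m) (x n) < e"
    proof (intro allI impI)
      fix m n assume "m \<ge> M" "n \<ge> M"
      have "dist (x m) (x n) \<le> dist (x m) (x M) + dist (x n) (x M)" by (rule dist_triangle2)
      then show "dist (x m) (x n) < e" using mk2[OF \<open>m \<ge> M\<close>] mk2[OF \<open>n \<ge> M\<close>] M[OF order_refl] by (smt (verit, best) field_sum_of_halves)
    qed
    then show "\<exists>M. \<forall>m\<ge>M. \<forall>n\<ge>M. dist (x m) (x n) < e" by blast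
  qed
  then obtain xinf where lim: "x \<longlonglongrightarrow> xinf" using Cauchy_convergent_iff convergent_def by blast
  have bnd: "norm (x k - xinf) \<le> lam / (1 - q) * q ^ k" for k
  proof -
    have "(\<lambda>m. dist (x m) (x k)) \<longlonglongrightarrow> dist xinf (x k)" by (intro tendsto_intros lim)
    then have "dist xinf (x k) \<le> lam * q^k / (1 - q)"
      by (rule LIMSEQ_le_const2) (use mk2 in blast)
    then show ?thesis by (simp add: dist_norm norm_minus_commute)
  qed
  have "infdist xinf S \<le> 0"
  proof (rule LIMSEQ_le)
    show "(\<lambda>k. infdist (x k) S) \<longlonglongrightarrow> infdist xinf S" by (intro tendsto_infdist lim)
    show "(\<lambda>k. D * q^k) \<longlonglongrightarrow> 0" using tendsto_mult[OF tendsto_const LIMSEQ_power_zero, of q D] q0 q1 by simp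
    show "\<exists>N. \<forall>n\<ge>N. infdist (x n) S \<le> D * q ^ n" using dk by blast
  qed
  then have "infdist xinf S = 0" using infdist_nonneg[of xinf S] by linarith
  then have "xinf \<in> S" using in_closed_iff_infdist_zero[OF S_closed S_ne] by simp
  then show ?thesis using part1 part2 lim bnd unfolding S_def by blast
qed

end
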